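(* In the setting of the context, for every fixed $j\ge0$, $$\pi_{i,j}\sim\frac{C^j\pi_{0,0}}{j!}\,i^{j}r_0^{\,i}\qquad\text{as } i\to\infty,$$ where $$C=\frac{q}{\bar q}\cdot\frac{\bar p\mu_hr_0^2+(p\mu_h+\bar p\bar\mu_h)r_0+p\bar\mu_h}{p\bar\mu_h-\bar p\mu_hr_0^2}.$$
   Context: Fix $p,q,\mu_h,\mu_l\in(0,1)$ with $p+q+\mu_h+\mu_l=1$ and $\mu_l\le\mu_h$. For real $x$ write $\bar x=1-x$; let $\rho=p/\mu_h+q/\mu_l$ and assume $\rho<1$. Let $(Q_1(n),Q_2(n))_{n\ge0}$ be the discrete-time Markov chain on $\mathbb{Z}_{\ge0}^2$ (numbers of high- and low-priority customers in a discrete-time preemptive priority queue, early arrival system) whose one-step transition probabilities from $(i,j)$ to $(i+k,j+l)$ are as follows (unlisted transitions have probability $0$). If $i\ge1$, $j\ge0$: $(k,l)=(1,0)$: $p\bar q\bar\mu_h$; $(1,1)$: $pq\bar\mu_h$; $(0,1)$: $pq\mu_h+\bar pq\bar\mu_h$; $(-1,1)$: $\bar pq\mu_h$; $(-1,0)$: $\bar p\bar q\mu_h$; $(0,0)$: $\bar p\bar q\bar\mu_h+p\bar q\mu_h$. If $i=0$, $j\ge1$: $(1,0)$: $p\bar q\bar\mu_h$; $(1,1)$: $pq\bar\mu_h$; $(0,1)$: $pq\mu_h+\bar pq\bar\mu_l$; $(0,-1)$: $\bar p\bar q\mu_l$; $(0,0)$: $\bar p\bar q\bar\mu_l+p\bar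 q\mu_h+\bar pq\mu_l$. If $(i,j)=(0,0)$: $(1,0)$: $p\bar q\bar\mu_h$; $(1,1)$: $pq\bar\mu_h$; $(0,1)$: $pq\mu_h+\bar pq\bar\mu_l$; $(0,0)$: $\bar p\bar q+p\bar q\mu_h+\bar pq\mu_l$. Let $(\pi_{i,j})_{i,j\ge0}$ be its stationary distribution; $f(n)\sim g(n)$ means $f(n)/g(n)\to1$. Let $r_0=1/x_1(0)$, where $x_1(0)=\frac{1-(p\mu_h+\bar p\bar\mu_h)\bar q+\sqrt{\Delta(0)}}{2p\bar\mu_h\bar q}$ with $\Delta(0)=(p\mu_h-\bar p\bar\mu_h)^2\bar q^2-2(p\mu_h+\bar p\bar\mu_h)\bar q+1>0$ and the positive square root. *)

theory Defs
  imports "HOL-Analysis.Analysis" "HOL-Library.Landau_Symbols"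
begin

text \<open>One-step transition probability from state s = (i,j) to state t of the
discrete-time preemptive priority queue (early arrival system).
Unlisted transitions have probability 0.\<close>

definition qtrans :: "real \<Rightarrow> real \<Rightarrow> real \<Rightarrow> real \<Rightarrow> nat \<times> nat \<Rightarrow> nat \<times> nat \<Rightarrow> real" where
  "qtrans p q mh ml s t =
    (let i = fst s; j = snd s;
         k = int (fst t) - int i; l = int (snd t) - int j in
     if i \<ge> 1 then
       (if (k, l) = (1, 0) then p * (1 - q) * (1 - mh)
        else if (k, l) = (1, 1) then p * q * (1 - mh)
        else if (k, l) = (0, 1) then p * q * mh + (1 - p) * q * (1 - mh)
        else if (k, l) = (-1, 1) then (1 - p) * q * mh
        else if (k, l) = (-1, 0) then (1 - p) * (1 - q) * mh
        else if (k, l) = (0, 0) then (1 - p) * (1 - q) * (1 - mh) + p * (1 - q) * mh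
        else 0)
     else if j \<ge> 1 then
       (if (k, l) = (1, 0) then p * (1 - q) * (1 - mh)
        else if (k, l) = (1, 1) then p * q * (1 - mh)
        else if (k, l) = (0, 1) then p * q * mh + (1 - p) * q * (1 - ml)
        else if (k, l) = (0, -1) then (1 - p) * (1 - q) * ml
        else if (k, l) = (0, 0) then (1 - p) * (1 - q) * (1 - ml) + p * (1 - q) * mh + (1 - p) * q * ml
        else 0)
     else
       (if (k, l) = (1, 0) then p * (1 - q) * (1 - mh)
        else if (k, l) = (1, 1) then p * q * (1 - mh)
        else if (k, l) = (0, 1) then p * q * mh + (1 - p) * q * (1 - ml)
        else if (k, l) = (0, 0) then (1 - p) * (1 - q) + p * (1 - q) * mh + (1 - p) * q * ml
        else 0))"

definition is_stationary ::
  "real \<Rightarrow> real \<Rightarrow> real \<Rightarrow> real \<Rightarrow> (nat \<Rightarrow> nat \<Rightarrow> real) \<Rightarrow> bool" where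
  "is_stationary p q mh ml \<pi> \<longleftrightarrow>
     (\<forall>i j. \<pi> i j \<ge> 0) \<and>
     ((\<lambda>(i, j). \<pi> i j) has_sum 1) UNIV \<and>
     (\<forall>i' j'. ((\<lambda>(i, j). \<pi> i j * qtrans p q mh ml (i, j) (i', j')) has_sum \<pi> i' j') UNIV)"

definition Delta0 :: "real \<Rightarrow> real \<Rightarrow> real \<Rightarrow> real" where
  "Delta0 p q mh = (p * mh - (1 - p) * (1 - mh))^2 * (1 - q)^2
                   - 2 * (p * mh + (1 - p) * (1 - mh)) * (1 - q) + 1"

definition x10 :: "real \<Rightarrow> real \<Rightarrow> real \<Rightarrow> real" where
  "x10 p q mh = (1 - (p * mh + (1 - p) * (1 - mh)) * (1 - q) + sqrt (Delta0 p q mh))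
                / (2 * p * (1 - mh) * (1 - q))"

definition r0 :: "real \<Rightarrow> real \<Rightarrow> real \<Rightarrow> real" where
  "r0 p q mh = 1 / x10 p q mh"

definition Cconst :: "real \<Rightarrow> real \<Rightarrow> real \<Rightarrow> real" where
  "Cconst p q mh = (let r = r0 p q mh in
     q / (1 - q) * (((1 - p) * mh * r^2 + (p * mh + (1 - p) * (1 - mh)) * r + p * (1 - mh))
                    / (p * (1 - mh) - (1 - p) * mh * r^2)))"

end

theory Submission imports Defs "HOL-Real_Asymp.Real_Asymp" begin
lemma poly_geom_summable:
  fixes t :: real and m :: nat
  assumes "t > 1"
  shows "summable (\<lambda>k. real (Suc k) ^ m / t ^ k)"
proof -
  have st: "sqrt t > 1" using assms by simp
  have "(\<lambda>k. real (Suc k) ^ m / sqrt t ^ k) \<longlonglongrightarrow> 0"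
    using st by real_asymp
  hence "eventually (\<lambda>k. real (Suc k) ^ m / sqrt t ^ k < 1) sequentially"
    by (rule order_tendstoD(2)) simp
  then obtain N where N: "\<And>k. k \<ge> N \<Longrightarrow> real (Suc k) ^ m / sqrt t ^ k < 1"
    unfolding eventually_sequentially by blast
  have ts: "t = sqrt t * sqrt t" using assms by simp
  show ?thesis
  proof (rule summable_comparison_test')
    show "summable (\<lambda>k. inverse (sqrt t) ^ k)"
      using st by (intro summable_geometric) (simp add: inverse_less_1_iff)
    fix k assume k: "k \<ge> N"
    have tk: "t ^ k = sqrt t ^ k * sqrt t ^ k"
      by (subst ts) (rule power_mult_distrib)
    have pos: "sqrt t ^ k > 0" using st by simp
    have "real (Suc k) ^ m / t ^ k = (real (Suc k) ^ m / sqrt t ^ k) * inverse (sqrt t ^ k)"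
      unfolding tk by (simp add: divide_inverse inverse_mult_distrib)
    also have "\<dots> \<le> 1 * inverse (sqrt t ^ k)"
      using N[OF k] pos by (intro mult_right_mono) auto
    finally have le: "real (Suc k) ^ m / t ^ k \<le> inverse (sqrt t) ^ k"
      by (simp add: power_inverse)
    have "norm (real (Suc k) ^ m / t ^ k) = real (Suc k) ^ m / t ^ k" using assms by simp
    with le show "norm (real (Suc k) ^ m / t ^ k) \<le> inverse (sqrt t) ^ k" by simp
  qed
qed

lemma iter_formula:
  fixes \<delta> \<rho> :: "nat \<Rightarrow> real"
  assumes "t \<noteq> 0" "\<And>n. t * \<delta> n = \<delta> (Suc n) + \<rho> n"
  shows "\<delta> n = \<delta> (n + k) / t ^ k + (\<Sum>j<k. \<rho> (n + j) / t ^ Suc j)"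
proof (induction k)
  case 0
  then show ?case by simp
next
  case (Suc k)
  have e: "\<delta> (n + k) = (\<delta> (n + Suc k) + \<rho> (n + k)) / t"
    using assms(2)[of "n+k"] assms(1) by (simp add: field_simps)
  have "\<delta> (n + k) / t ^ k = \<delta> (n + Suc k) / t ^ Suc k + \<rho> (n + k) / t ^ Suc k"
    unfolding e using assms(1) by (simp add: field_simps)
  with Suc show ?case by simp
qed

lemma rho_lim:
  fixes G \<rho> :: "nat \<Rightarrow> real"
  assumes Glim: "(\<lambda>n. G n / real n ^ m) \<longlonglongrightarrow> L"
    and rho_eq: "\<And>n. \<rho> n = (G n - L * real n ^ m) + A * (real (Suc n) ^ m - real n ^ m)"
  shows "(\<lambda>n. \<rho> n / real n ^ m) \<longlonglongrightarrow> 0"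
proof -
  have ratio: "(\<lambda>n. real (Suc n) ^ m / real n ^ m) \<longlonglongrightarrow> 1" by real_asymp
  have lim: "(\<lambda>n. (G n / real n ^ m - L) + A * (real (Suc n) ^ m / real n ^ m - 1)) \<longlonglongrightarrow> (L - L) + A * (1 - 1)"
    by (intro tendsto_intros Glim ratio)
  have ev: "\<forall>\<^sub>F n in sequentially. (G n / real n ^ m - L) + A * (real (Suc n) ^ m / real n ^ m - 1) = \<rho> n / real n ^ m"
    unfolding eventually_sequentially
  proof (intro exI[of _ 1] allI impI)
    fix n :: nat assume "n \<ge> 1"
    hence np: "real n ^ m \<noteq> 0" by simp
    show "(G n / real n ^ m - L) + A * (real (Suc n) ^ m / real n ^ m - 1) = \<rho> n / real n ^ m"
      unfolding rho_eq using np by (simp add: diff_divide_distrib add_divide_distrib right_diff_distrib)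
  qed
  show ?thesis using Lim_transform_eventually[OF lim ev] by simp
qed

lemma delta_lim:
  fixes \<delta> \<rho> :: "nat \<Rightarrow> real" and t S :: real
  assumes t1: "t > 1" and rho0: "(\<lambda>n. \<rho> n / real n ^ m) \<longlonglongrightarrow> 0"
  and it: "\<And>n k. \<delta> n = \<delta> (n + k) / t ^ k + (\<Sum>j<k. \<rho> (n + j) / t ^ Suc j)"
  and dl0: "\<And>n. (\<lambda>k. \<delta> (n+k) / t^k) \<longlonglongrightarrow> 0"
  and S_def: "S = suminf (\<lambda>j. real (Suc j) ^ m / t ^ j)"
  and summ: "summable (\<lambda>j. real (Suc j) ^ m / t ^ j)" and S0: "S \<ge> 0"
  shows "(\<lambda>n. \<delta> n / real n ^ m) \<longlonglongrightarrow> 0"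
proof -
  have delta0: "(\<lambda>n. \<delta> n / real n ^ m) \<longlonglongrightarrow> 0"
  proof (rule LIMSEQ_I)
    fix \<epsilon> :: real assume ep: "\<epsilon> > 0"
    define \<eta> where "\<eta> = \<epsilon> / (S + 1)"
    have eta: "\<eta> > 0" using ep S0 by (simp add: \<eta>_def)
    obtain N where N: "\<And>n. n \<ge> N \<Longrightarrow> norm (\<rho> n / real n ^ m - 0) < \<eta>"
      using LIMSEQ_D[OF rho0 eta] by blast
    show "\<exists>no. \<forall>n\<ge>no. norm (\<delta> n / real n ^ m - 0) < \<epsilon>"
    proof (rule exI[of _ "max N 1"], intro allI impI)
      fix n assume n: "n \<ge> max N 1"
      have npos: "real n ^ m > 0" using n by simp
      have rb: "\<bar>\<rho> (n + j)\<bar> \<le> \<eta> * (real n ^ m * real (Suc j) ^ m)" for j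
      proof -
        have "n + j \<ge> N" using n by simp
        have xpos: "real (n+j) ^ m > 0" using n by simp
        from N[OF \<open>n + j \<ge> N\<close>] have "\<bar>\<rho> (n + j)\<bar> / real (n+j) ^ m < \<eta>"
          using xpos by (simp add: abs_divide)
        hence "\<bar>\<rho> (n + j)\<bar> < \<eta> * real (n+j) ^ m"
          using xpos by (simp add: pos_divide_less_eq mult.commute)
        also have "real (n+j) ^ m \<le> (real n * real (Suc j)) ^ m"
        proof (intro power_mono)
          have "real j \<le> real n * real j" using n by (simp add: mult_le_cancel_right1)
          hence "real n + real j \<le> real n + real n * real j" by simp
          thus "real (n + j) \<le> real n * real (Suc j)" by (simp add: algebra_simps)
        qed simp
        hence "\<eta> * real (n+j) ^ m \<le> \<eta> * (real n ^ m * real (Suc j) ^ m)"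
          using eta by (simp add: power_mult_distrib mult_left_mono)
        finally show ?thesis by simp
      qed
      have bnd: "\<bar>\<delta> n\<bar> \<le> \<bar>\<delta> (n + k) / t ^ k\<bar> + \<eta> * real n ^ m * S" for k
      proof -
        have "\<bar>\<Sum>j<k. \<rho> (n + j) / t ^ Suc j\<bar> \<le> (\<Sum>j<k. \<bar>\<rho> (n + j)\<bar> / t ^ Suc j)"
          by (rule order_trans[OF sum_abs]) (use t1 in \<open>simp add: abs_divide power_abs\<close>)
        also have "\<dots> \<le> (\<Sum>j<k. \<eta> * real n ^ m * (real (Suc j) ^ m / t ^ j))"
        proof (rule sum_mono)
          fix j
          have tj: "t ^ j > 0" using t1 by simp
          have tj2: "t ^ j \<le> t ^ Suc j" using t1 by (simp add: power_increasing)
          have "\<bar>\<rho> (n + j)\<bar> / t ^ Suc j \<le> \<bar>\<rho> (n + j)\<bar> / t ^ j"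
            by (rule divide_left_mono[OF tj2 abs_ge_zero]) (use tj tj2 in simp)
          also have "\<dots> \<le> \<eta> * (real n ^ m * real (Suc j) ^ m) / t ^ j"
            using tj rb[of j] by (intro divide_right_mono) auto
          finally show "\<bar>\<rho> (n + j)\<bar> / t ^ Suc j \<le> \<eta> * real n ^ m * (real (Suc j) ^ m / t ^ j)"
            by simp
        qed
        also have "\<dots> = \<eta> * real n ^ m * (\<Sum>j<k. real (Suc j) ^ m / t ^ j)"
          by (simp add: sum_distrib_left)
        also have "\<dots> \<le> \<eta> * real n ^ m * S"
          unfolding S_def using eta npos t1
          by (intro mult_left_mono sum_le_suminf summ) auto
        finally have "\<bar>\<Sum>j<k. \<rho> (n + j) / t ^ Suc j\<bar> \<le> \<eta> * real n ^ m * S" .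
        thus ?thesis using it[of n k] by linarith
      qed
      have "\<bar>\<delta> n\<bar> \<le> 0 + \<eta> * real n ^ m * S"
      proof (rule LIMSEQ_le_const)
        show "(\<lambda>k. \<bar>\<delta> (n + k) / t ^ k\<bar> + \<eta> * real n ^ m * S) \<longlonglongrightarrow> 0 + \<eta> * real n ^ m * S"
          using tendsto_add[OF tendsto_rabs_zero[OF dl0[of n]] tendsto_const[of "\<eta> * real n ^ m * S"]] by simp
        show "\<exists>N. \<forall>k\<ge>N. \<bar>\<delta> n\<bar> \<le> \<bar>\<delta> (n + k) / t ^ k\<bar> + \<eta> * real n ^ m * S"
          using bnd by blast
      qed
      hence "\<bar>\<delta> n / real n ^ m\<bar> \<le> \<eta> * S"
        using npos by (simp add: abs_divide pos_divide_le_eq mult_ac)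
      also have "\<eta> * S < \<epsilon>"
      proof -
        have "S / (S+1) < 1" using S0 by simp
        hence "\<epsilon> * (S / (S+1)) < \<epsilon> * 1" using ep by (intro mult_strict_left_mono)
        thus ?thesis by (simp add: \<eta>_def)
      qed
      finally show "norm (\<delta> n / real n ^ m - 0) < \<epsilon>" by simp
    qed
  qed
  thus ?thesis .
qed


lemma dl0_lim:
  fixes d :: "nat \<Rightarrow> real"
  assumes t1: "t > (1::real)" and dlim: "(\<lambda>k. d (n+k) / t^k) \<longlonglongrightarrow> 0"
  shows "(\<lambda>k. (d (n+k) - A * real (n+k) ^ m) / t^k) \<longlonglongrightarrow> 0"
proof -
  have "(\<lambda>k. real (n+k)^m / t^k) \<longlonglongrightarrow> 0" using t1 by real_asymp
  hence "(\<lambda>k. d (n+k) / t^k - A * (real (n+k)^m / t^k)) \<longlonglongrightarrow> 0 - A * 0"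
    by (intro tendsto_intros dlim)
  thus ?thesis by (simp add: diff_divide_distrib)
qed
lemma tA_lem: "t > (1::real) \<Longrightarrow> t * (L / (t - 1)) = L + L / (t - 1)"
  by (simp add: field_simps)

lemma rho_alg:
  fixes t d d' g A L x y :: real
  assumes "t * d = d' + g" "t * A = L + A"
  shows "t * (d - A * x) - (d' - A * y) = (g - L * x) + A * (y - x)"
proof -
  have "t * (d - A * x) - (d' - A * y) = (t * d - d') - (t * A) * x + A * y"
    by (simp add: algebra_simps)
  also have "\<dots> = g - (L + A) * x + A * y" using assms by simp
  also have "\<dots> = (g - L * x) + A * (y - x)" by (simp add: algebra_simps)
  finally show ?thesis .
qed

lemma lemT:
  fixes d G :: "nat \<Rightarrow> real" and t L :: real and m :: nat
  assumes t1: "t > 1" and rec: "\<And>n. t * d n = d (Suc n) + G n"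
    and dlim: "\<And>n. (\<lambda>k. d (n+k) / t^k) \<longlonglongrightarrow> 0"
    and Glim: "(\<lambda>n. G n / real n ^ m) \<longlonglongrightarrow> L"
  shows "(\<lambda>n. d n / real n ^ m) \<longlonglongrightarrow> L / (t - 1)"
proof -
  define A where "A = L / (t - 1)"
  define \<delta> where "\<delta> n = d n - A * real n ^ m" for n
  define \<rho> where "\<rho> n = t * \<delta> n - \<delta> (Suc n)" for n
  have tA: "t * A = L + A" unfolding A_def by (rule tA_lem[OF t1])
  have rho_eq: "\<rho> n = (G n - L * real n ^ m) + A * (real (Suc n) ^ m - real n ^ m)" for n
    unfolding \<rho>_def \<delta>_def by (rule rho_alg[OF _ tA]) (use rec[of n] in simp)
  have rho0: "(\<lambda>n. \<rho> n / real n ^ m) \<longlonglongrightarrow> 0"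
    by (rule rho_lim[OF Glim rho_eq])
  have t0: "t \<noteq> 0" using t1 by simp
  have it: "\<delta> n = \<delta> (n + k) / t ^ k + (\<Sum>j<k. \<rho> (n + j) / t ^ Suc j)" for n k
    by (rule iter_formula[OF t0]) (simp add: \<rho>_def)
  have dl0: "(\<lambda>k. \<delta> (n+k) / t^k) \<longlonglongrightarrow> 0" for n
    unfolding \<delta>_def by (rule dl0_lim[OF t1 dlim])
  have summ: "summable (\<lambda>j. real (Suc j) ^ m / t ^ j)" using poly_geom_summable t1 by blast
  have S0: "suminf (\<lambda>j. real (Suc j) ^ m / t ^ j) \<ge> 0" using t1 by (intro suminf_nonneg summ) auto
  have delta0: "(\<lambda>n. \<delta> n / real n ^ m) \<longlonglongrightarrow> 0"
    by (rule delta_lim[OF t1 rho0 it dl0 refl summ S0])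
  have lim: "(\<lambda>n. A + \<delta> n / real n ^ m) \<longlonglongrightarrow> A + 0"
    by (intro tendsto_intros delta0)
  have ev: "\<forall>\<^sub>F n in sequentially. A + \<delta> n / real n ^ m = d n / real n ^ m"
    unfolding eventually_sequentially
  proof (intro exI[of _ 1] allI impI)
    fix n :: nat assume "n \<ge> 1"
    hence np: "real n ^ m \<noteq> 0" by simp
    show "A + \<delta> n / real n ^ m = d n / real n ^ m"
      unfolding \<delta>_def using np by (simp add: diff_divide_distrib)
  qed
  show ?thesis using Lim_transform_eventually[OF lim ev] by (simp add: A_def)
qed

lemma pow_step_bounds:
  fixes k :: real and m :: nat
  assumes "k \<ge> 0"
  shows "real (Suc m) * k ^ m \<le> (k + 1) ^ Suc m - k ^ Suc m"
    and "(k + 1) ^ Suc m - k ^ Suc m \<le> real (Suc m) * (k + 1) ^ m"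
proof -
  have eq: "(k + 1) ^ Suc m - k ^ Suc m = (\<Sum>p<Suc m. (k+1) ^ p * k ^ (m - p))"
    using diff_power_eq_sum[of "k+1" m k] by simp
  have lo: "k ^ m \<le> (k+1) ^ p * k ^ (m - p)" if "p < Suc m" for p
  proof -
    have "k ^ m = k ^ p * k ^ (m - p)" using that by (simp flip: power_add)
    also have "\<dots> \<le> (k+1) ^ p * k ^ (m - p)"
      using assms by (intro mult_right_mono power_mono) auto
    finally show ?thesis .
  qed
  have hi: "(k+1) ^ p * k ^ (m - p) \<le> (k+1) ^ m" if "p < Suc m" for p
  proof -
    have "(k+1) ^ p * k ^ (m - p) \<le> (k+1) ^ p * (k+1) ^ (m - p)"
      using assms by (intro mult_left_mono power_mono) auto
    also have "\<dots> = (k+1) ^ m" using that by (simp flip: power_add)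
    finally show ?thesis .
  qed
  have "of_nat (card {..<Suc m}) * k ^ m \<le> (\<Sum>p<Suc m. (k+1) ^ p * k ^ (m - p))"
    by (rule sum_bounded_below) (rule lo, simp)
  thus "real (Suc m) * k ^ m \<le> (k + 1) ^ Suc m - k ^ Suc m"
    by (simp only: eq card_lessThan)
  have "(\<Sum>p<Suc m. (k+1) ^ p * k ^ (m - p)) \<le> of_nat (card {..<Suc m}) * (k + 1) ^ m"
    by (rule sum_bounded_above) (rule hi, simp)
  thus "(k + 1) ^ Suc m - k ^ Suc m \<le> real (Suc m) * (k + 1) ^ m"
    by (simp only: eq card_lessThan)
qed

lemma psum_upper: "real (Suc m) * (\<Sum>k<n. real k ^ m) \<le> real n ^ Suc m"
proof (induction n)
  case 0 then show ?case by simp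
next
  case (Suc n)
  have "real (Suc m) * (\<Sum>k<Suc n. real k ^ m) = real (Suc m) * (\<Sum>k<n. real k ^ m) + real (Suc m) * real n ^ m"
    by (simp add: algebra_simps)
  also have "\<dots> \<le> real n ^ Suc m + ((real n + 1) ^ Suc m - real n ^ Suc m)"
    using Suc.IH pow_step_bounds(1)[of "real n" m] by linarith
  also have "\<dots> = real (Suc n) ^ Suc m" by (simp add: add.commute)
  finally show ?case .
qed

lemma psum_lower: "real n ^ Suc m \<le> real (Suc m) * ((\<Sum>k<n. real k ^ m) + real n ^ m)"
proof (induction n)
  case 0 then show ?case by simp
next
  case (Suc n)
  have "real (Suc n) ^ Suc m = real n ^ Suc m + ((real n + 1) ^ Suc m - real n ^ Suc m)" by (simp add: add.commute)
  also have "\<dots> \<le> real (Suc m) * ((\<Sum>k<n. real k ^ m) + real n ^ m) + real (Suc m) * (real n + 1) ^ m"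
    using Suc.IH pow_step_bounds(2)[of "real n" m] by linarith
  also have "\<dots> = real (Suc m) * ((\<Sum>k<Suc n. real k ^ m) + real (Suc n) ^ m)"
    by (simp add: algebra_simps)
  finally show ?case .
qed

lemma psum_lim: "(\<lambda>n. (\<Sum>k<n. real k ^ m) / real n ^ Suc m) \<longlonglongrightarrow> 1 / real (Suc m)"
proof (rule tendsto_sandwich[where f = "\<lambda>n. 1 / real (Suc m) - 1 / real n" and h = "\<lambda>n. 1 / real (Suc m)"])
  show "(\<lambda>n. 1 / real (Suc m) - 1 / real n) \<longlonglongrightarrow> 1 / real (Suc m)" by real_asymp
  show "(\<lambda>n. 1 / real (Suc m)) \<longlonglongrightarrow> 1 / real (Suc m)" by simp
  show "\<forall>\<^sub>F n in sequentially. (\<Sum>k<n. real k ^ m) / real n ^ Suc m \<le> 1 / real (Suc m)"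
    unfolding eventually_sequentially
  proof (intro exI[of _ 1] allI impI)
    fix n :: nat assume "n \<ge> 1"
    hence np: "real n ^ Suc m > 0" by simp
    show "(\<Sum>k<n. real k ^ m) / real n ^ Suc m \<le> 1 / real (Suc m)"
      using psum_upper[of m n] np by (simp add: divide_simps mult.commute)
  qed
  show "\<forall>\<^sub>F n in sequentially. 1 / real (Suc m) - 1 / real n \<le> (\<Sum>k<n. real k ^ m) / real n ^ Suc m"
    unfolding eventually_sequentially
  proof (intro exI[of _ 1] allI impI)
    fix n :: nat assume "n \<ge> 1"
    hence np: "real n ^ Suc m > 0" and n0: "real n > 0" by simp_all
    have e1: "real n ^ Suc m / real n = real n ^ m" using n0 by simp
    have "(1 / real (Suc m) - 1 / real n) * real n ^ Suc m = real n ^ Suc m / real (Suc m) - real n ^ Suc m / real n"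
      by (simp add: left_diff_distrib)
    also have "\<dots> = real n ^ Suc m / real (Suc m) - real n ^ m" by (simp only: e1)
    also have "\<dots> \<le> (\<Sum>k<n. real k ^ m)"
    proof -
      have "real n ^ Suc m / real (Suc m) \<le> (\<Sum>k<n. real k ^ m) + real n ^ m"
        using psum_lower[of n m] by (simp only: pos_divide_le_eq of_nat_0_less_iff zero_less_Suc mult.commute)
      thus ?thesis by linarith
    qed
    finally show "1 / real (Suc m) - 1 / real n \<le> (\<Sum>k<n. real k ^ m) / real n ^ Suc m"
      using np by (simp add: pos_le_divide_eq)
  qed
qed


lemma lemS:
  fixes g d :: "nat \<Rightarrow> real" and A :: real and m :: nat
  assumes rec: "\<And>n. g (Suc n) = g n + d n" and dl: "(\<lambda>n. d n / real n ^ m) \<longlonglongrightarrow> A"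
  shows "(\<lambda>n. g n / real n ^ Suc m) \<longlonglongrightarrow> A / real (Suc m)"
proof -
  define e where "e k = d k - A * real k ^ m" for k
  define E where "E n = (\<Sum>k<n. e k)" for n
  define P where "P n = (\<Sum>k<n. real k ^ m)" for n
  have gsum: "g n = g 0 + A * P n + E n" for n
  proof (induction n)
    case 0 show ?case by (simp add: P_def E_def)
  next
    case (Suc n)
    have "g (Suc n) = g 0 + A * P n + E n + d n" using Suc rec[of n] by simp
    also have "d n = A * real n ^ m + e n" by (simp add: e_def)
    finally show ?case by (simp add: P_def E_def algebra_simps)
  qed
  have el: "(\<lambda>k. e k / real k ^ m) \<longlonglongrightarrow> 0"
  proof -
    have lim: "(\<lambda>k. d k / real k ^ m - A) \<longlonglongrightarrow> A - A" by (intro tendsto_intros dl)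
    have ev: "\<forall>\<^sub>F k in sequentially. d k / real k ^ m - A = e k / real k ^ m"
      unfolding eventually_sequentially
    proof (intro exI[of _ 1] allI impI)
      fix k :: nat assume "k \<ge> 1"
      hence "real k ^ m \<noteq> 0" by simp
      thus "d k / real k ^ m - A = e k / real k ^ m" by (simp add: e_def diff_divide_distrib)
    qed
    show ?thesis using Lim_transform_eventually[OF lim ev] by simp
  qed
  have El: "(\<lambda>n. E n / real n ^ Suc m) \<longlonglongrightarrow> 0"
  proof (rule LIMSEQ_I)
    fix \<epsilon> :: real assume ep: "\<epsilon> > 0"
    have ep2: "\<epsilon> / 2 > 0" using ep by simp
    obtain N0 where N0: "\<And>k. k \<ge> N0 \<Longrightarrow> norm (e k / real k ^ m - 0) < \<epsilon> / 2"
      using LIMSEQ_D[OF el ep2] by blast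
    define N1 where "N1 = max N0 1"
    define B where "B = (\<Sum>k<N1. \<bar>e k\<bar>)"
    have Bl: "(\<lambda>n. B / real n ^ Suc m) \<longlonglongrightarrow> 0" by real_asymp
    obtain N2 where N2: "\<And>n. n \<ge> N2 \<Longrightarrow> norm (B / real n ^ Suc m - 0) < \<epsilon> / 2"
      using LIMSEQ_D[OF Bl ep2] by blast
    show "\<exists>no. \<forall>n\<ge>no. norm (E n / real n ^ Suc m - 0) < \<epsilon>"
    proof (rule exI[of _ "max N1 N2"], intro allI impI)
      fix n assume n: "n \<ge> max N1 N2"
      have n1: "n \<ge> N1" and n2: "n \<ge> N2" using n by auto
      have npos: "real n ^ Suc m > 0" using n1 by (simp add: N1_def)
      have ek: "\<bar>e k\<bar> \<le> \<epsilon> / 2 * real k ^ m" if "k \<ge> N1" for k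
      proof -
        have kpos: "real k ^ m > 0" using that by (simp add: N1_def)
        have "\<bar>e k\<bar> / real k ^ m < \<epsilon> / 2"
          using N0[of k] that kpos by (simp add: N1_def abs_divide)
        thus ?thesis using kpos by (simp add: pos_divide_less_eq)
      qed
      have split: "(\<Sum>k<n. \<bar>e k\<bar>) = B + (\<Sum>k\<in>{N1..<n}. \<bar>e k\<bar>)"
        unfolding B_def using n1
        by (simp add: lessThan_atLeast0 sum.atLeastLessThan_concat)
      have "(\<Sum>k\<in>{N1..<n}. \<bar>e k\<bar>) \<le> (\<Sum>k\<in>{N1..<n}. \<epsilon> / 2 * real k ^ m)"
        by (rule sum_mono, rule ek) simp
      also have "\<dots> \<le> (\<Sum>k<n. \<epsilon> / 2 * real k ^ m)"
        using ep by (intro sum_mono2) auto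
      also have "\<dots> = \<epsilon> / 2 * P n" by (simp add: P_def sum_distrib_left)
      also have "\<dots> \<le> \<epsilon> / 2 * real n ^ Suc m"
      proof -
        have "real (Suc m) * P n \<le> real n ^ Suc m" unfolding P_def by (rule psum_upper)
        moreover have "P n \<ge> 0" unfolding P_def by (intro sum_nonneg) simp
        moreover have "P n \<le> real (Suc m) * P n"
          using \<open>P n \<ge> 0\<close> mult_left_mono[of 1 "real (Suc m)" "P n"] by (simp add: mult.commute)
        ultimately have "P n \<le> real n ^ Suc m" by linarith
        thus ?thesis using ep by (intro mult_left_mono) auto
      qed
      finally have "\<bar>E n\<bar> \<le> B + \<epsilon> / 2 * real n ^ Suc m"
        unfolding E_def using split sum_abs[of e "{..<n}"] by linarith
      hence "\<bar>E n\<bar> / real n ^ Suc m \<le> (B + \<epsilon> / 2 * real n ^ Suc m) / real n ^ Suc m"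
        using npos by (intro divide_right_mono) auto
      also have "\<dots> = B / real n ^ Suc m + \<epsilon> / 2"
      proof -
        have X0: "real n ^ Suc m \<noteq> 0" using npos by linarith
        show ?thesis by (simp only: add_divide_distrib nonzero_mult_div_cancel_right[OF X0])
      qed
      also have "\<dots> < \<epsilon> / 2 + \<epsilon> / 2"
      proof -
        have "B \<ge> 0" unfolding B_def by (intro sum_nonneg) simp
        hence "B / real n ^ Suc m < \<epsilon> / 2" using N2[OF n2] by simp
        thus ?thesis by linarith
      qed
      finally show "norm (E n / real n ^ Suc m - 0) < \<epsilon>" using npos by (simp add: abs_divide)
    qed
  qed
  have Pl: "(\<lambda>n. P n / real n ^ Suc m) \<longlonglongrightarrow> 1 / real (Suc m)"
    unfolding P_def by (rule psum_lim)
  have g0l: "(\<lambda>n. g 0 / real n ^ Suc m) \<longlonglongrightarrow> 0" by real_asymp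
  have "(\<lambda>n. g 0 / real n ^ Suc m + A * (P n / real n ^ Suc m) + E n / real n ^ Suc m)
        \<longlonglongrightarrow> 0 + A * (1 / real (Suc m)) + 0"
    by (intro tendsto_intros g0l Pl El)
  moreover have "g n / real n ^ Suc m = g 0 / real n ^ Suc m + A * (P n / real n ^ Suc m) + E n / real n ^ Suc m" for n
    by (subst gsum) (simp add: add_divide_distrib)
  ultimately show ?thesis by simp
qed


lemma q_right: "qtrans p q mh ml (n, j) (Suc n, j) = p*(1-q)*(1-mh)"
  by (auto simp: qtrans_def Let_def)
lemma q_left: "qtrans p q mh ml (Suc i, j) (i, j) = (1-p)*(1-q)*mh"
  by (auto simp: qtrans_def Let_def)
lemma q_stay: "qtrans p q mh ml (Suc n, j) (Suc n, j) = (1-p)*(1-q)*(1-mh) + p*(1-q)*mh"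
  by (auto simp: qtrans_def Let_def)
lemma q_up_right: "qtrans p q mh ml (n, j) (Suc n, Suc j) = p*q*(1-mh)"
  by (auto simp: qtrans_def Let_def)
lemma q_up: "qtrans p q mh ml (Suc n, j) (Suc n, Suc j) = p*q*mh + (1-p)*q*(1-mh)"
  by (auto simp: qtrans_def Let_def)
lemma q_up_left: "qtrans p q mh ml (Suc (Suc n), j) (Suc n, Suc j) = (1-p)*q*mh"
  by (auto simp: qtrans_def Let_def)
lemma q_down0: "qtrans p q mh ml (0, Suc j) (0, j) = (1-p)*(1-q)*ml"
  by (auto simp: qtrans_def Let_def)
lemma q_zero:
  assumes "qtrans p q mh ml (i, j) (Suc n, j') \<noteq> 0"
  shows "(i = n \<or> i = Suc n \<or> i = Suc (Suc n)) \<and> (j = j' \<or> Suc j = j')"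
  using assms by (auto simp: qtrans_def Let_def split: if_splits)
lemma q_nonneg:
  assumes "0 \<le> p" "p \<le> 1" "0 \<le> q" "q \<le> 1" "0 \<le> mh" "mh \<le> 1" "0 \<le> ml" "ml \<le> 1"
  shows "qtrans p q mh ml s t \<ge> 0"
  using assms unfolding qtrans_def Let_def
  by (simp split: if_split)
lemma stat_term_le:
  assumes st: "is_stationary p q mh ml \<pi>"
    and qn: "\<And>s t. qtrans p q mh ml s t \<ge> 0"
  shows "\<pi> a b * qtrans p q mh ml (a, b) (i, j) \<le> \<pi> i j"
proof -
  let ?h = "\<lambda>(x, y). \<pi> x y * qtrans p q mh ml (x, y) (i, j)"
  have nn: "\<And>x y. \<pi> x y \<ge> 0" using st by (simp add: is_stationary_def)
  have full: "(?h has_sum \<pi> i j) UNIV" using st by (simp add: is_stationary_def)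
  have single: "(?h has_sum ?h (a, b)) {(a, b)}"
    using has_sum_finite[of "{(a,b)}" ?h] by simp
  have "?h (a, b) \<le> \<pi> i j"
    by (rule has_sum_mono_neutral[OF single full]) (auto intro!: mult_nonneg_nonneg nn qn)
  thus ?thesis by simp
qed

lemma stat_le1:
  assumes st: "is_stationary p q mh ml \<pi>"
  shows "\<pi> i j \<le> 1"
proof -
  let ?h = "\<lambda>(x, y). \<pi> x y"
  have nn: "\<And>x y. \<pi> x y \<ge> 0" using st by (simp add: is_stationary_def)
  have full: "(?h has_sum 1) UNIV" using st by (simp add: is_stationary_def)
  have single: "(?h has_sum ?h (i, j)) {(i, j)}"
    using has_sum_finite[of "{(i,j)}" ?h] by simp
  have "?h (i, j) \<le> 1"
    by (rule has_sum_mono_neutral[OF single full]) (auto intro!: nn)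
  thus ?thesis by simp
qed

lemma bal_gen:
  assumes st: "is_stationary p q mh ml \<pi>" and fin: "finite B"
    and sub: "\<And>i j. (i = n \<or> i = Suc n \<or> i = Suc (Suc n)) \<and> (j = j' \<or> Suc j = j') \<Longrightarrow> (i, j) \<in> B"
  shows "\<pi> (Suc n) j' = (\<Sum>x\<in>B. \<pi> (fst x) (snd x) * qtrans p q mh ml x (Suc n, j'))"
proof -
  let ?h = "\<lambda>(x, y). \<pi> x y * qtrans p q mh ml (x, y) (Suc n, j')"
  have full: "(?h has_sum \<pi> (Suc n) j') UNIV" using st by (simp add: is_stationary_def)
  have "(?h has_sum (\<Sum>x\<in>B. ?h x)) UNIV"
  proof (rule has_sum_finite_neutralI[OF fin])
    show "B \<subseteq> UNIV" by simp
    show "?h x = 0" if "x \<in> UNIV - B" for x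
    proof (cases x)
      case (Pair i j)
      show ?thesis
      proof (rule ccontr)
        assume "?h x \<noteq> 0"
        hence "qtrans p q mh ml (i, j) (Suc n, j') \<noteq> 0" using Pair by auto
        from sub[OF q_zero[OF this]] that Pair show False by simp
      qed
    qed
  qed simp
  hence "\<pi> (Suc n) j' = (\<Sum>x\<in>B. ?h x)" using has_sum_unique[OF full] by blast
  also have "\<dots> = (\<Sum>x\<in>B. \<pi> (fst x) (snd x) * qtrans p q mh ml x (Suc n, j'))"
    by (intro sum.cong) auto
  finally show ?thesis .
qed

lemma bal0:
  assumes st: "is_stationary p q mh ml \<pi>"
  shows "\<pi> (Suc n) 0 = p*(1-q)*(1-mh) * \<pi> n 0 + (1-p)*(1-q)*mh * \<pi> (Suc (Suc n)) 0
      + ((1-p)*(1-q)*(1-mh) + p*(1-q)*mh) * \<pi> (Suc n) 0"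
proof -
  have "\<pi> (Suc n) 0 = (\<Sum>x\<in>{(n,0), (Suc n, 0), (Suc (Suc n), 0)}. \<pi> (fst x) (snd x) * qtrans p q mh ml x (Suc n, 0))"
    by (rule bal_gen[OF st]) auto
  thus ?thesis by (simp add: q_right q_left q_stay algebra_simps)
qed

lemma balS:
  assumes st: "is_stationary p q mh ml \<pi>"
  shows "\<pi> (Suc n) (Suc m) = p*(1-q)*(1-mh) * \<pi> n (Suc m) + (1-p)*(1-q)*mh * \<pi> (Suc (Suc n)) (Suc m)
      + ((1-p)*(1-q)*(1-mh) + p*(1-q)*mh) * \<pi> (Suc n) (Suc m)
      + (p*q*(1-mh) * \<pi> n m + (p*q*mh + (1-p)*q*(1-mh)) * \<pi> (Suc n) m + (1-p)*q*mh * \<pi> (Suc (Suc n)) m)"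
proof -
  have "\<pi> (Suc n) (Suc m) = (\<Sum>x\<in>{(n,Suc m), (Suc n, Suc m), (Suc (Suc n), Suc m), (n, m), (Suc n, m), (Suc (Suc n), m)}.
      \<pi> (fst x) (snd x) * qtrans p q mh ml x (Suc n, Suc m))"
    by (rule bal_gen[OF st]) auto
  thus ?thesis by (simp add: q_right q_left q_stay q_up_right q_up q_up_left algebra_simps)
qed

lemma pi00_pos:
  assumes st: "is_stationary p q mh ml \<pi>"
    and "0 < p" "p < 1" "0 < q" "q < 1" "0 < mh" "mh < 1" "0 < ml" "ml < 1"
  shows "\<pi> 0 0 > 0"
proof (rule ccontr)
  assume "\<not> \<pi> 0 0 > 0"
  have nn: "\<And>x y. \<pi> x y \<ge> 0" using st by (simp add: is_stationary_def)
  have qn: "\<And>s t. qtrans p q mh ml s t \<ge> 0" using assms by (intro q_nonneg) auto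
  have z00: "\<pi> 0 0 = 0" using \<open>\<not> \<pi> 0 0 > 0\<close> nn[of 0 0] by simp
  have lpos: "(1-p)*(1-q)*ml > 0" and bpos: "(1-p)*(1-q)*mh > 0" using assms by simp_all
  have col0: "\<pi> 0 j = 0" for j
  proof (induction j)
    case 0 show ?case by (rule z00)
  next
    case (Suc j)
    have "\<pi> 0 (Suc j) * ((1-p)*(1-q)*ml) \<le> \<pi> 0 j"
      using stat_term_le[OF st qn, of 0 "Suc j" 0 j] by (simp add: q_down0)
    hence "\<pi> 0 (Suc j) * ((1-p)*(1-q)*ml) \<le> 0" using Suc by simp
    hence "\<pi> 0 (Suc j) \<le> 0" using lpos mult_le_cancel_right_pos[of "(1-p)*(1-q)*ml" "\<pi> 0 (Suc j)" 0] by simp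
    thus ?case using nn[of 0 "Suc j"] by simp
  qed
  have all0: "\<pi> i j = 0" for i j
  proof (induction i)
    case 0 show ?case by (rule col0)
  next
    case (Suc i)
    have "\<pi> (Suc i) j * ((1-p)*(1-q)*mh) \<le> \<pi> i j"
      using stat_term_le[OF st qn, of "Suc i" j i j] by (simp add: q_left)
    hence "\<pi> (Suc i) j * ((1-p)*(1-q)*mh) \<le> 0" using Suc by simp
    hence "\<pi> (Suc i) j \<le> 0" using bpos mult_le_cancel_right_pos[of "(1-p)*(1-q)*mh" "\<pi> (Suc i) j" 0] by simp
    thus ?case using nn[of "Suc i" j] by simp
  qed
  have full: "((\<lambda>(x, y). \<pi> x y) has_sum 1) UNIV" using st by (simp add: is_stationary_def)
  have "((\<lambda>(x, y). \<pi> x y) has_sum 0) UNIV" by (rule has_sum_0) (auto simp: all0)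
  from has_sum_unique[OF full this] show False by simp
qed


lemma r_facts:
  fixes p q mh :: real
  assumes "0 < p" "p < 1" "0 < q" "q < 1" "0 < mh" "mh < 1" and D: "Delta0 p q mh > 0"
  defines "a \<equiv> p*(1-q)*(1-mh)" and "b \<equiv> (1-p)*(1-q)*mh"
    and "K \<equiv> 1 - ((1-p)*(1-q)*(1-mh) + p*(1-q)*mh)"
  shows "0 < r0 p q mh" "r0 p q mh < 1" "b * (r0 p q mh)^2 - K * r0 p q mh + a = 0"
proof -
  have apos: "a > 0" and bpos: "b > 0" using assms by (simp_all add: a_def b_def)
  have Kq: "a + b - K = - q" unfolding a_def b_def K_def by (simp add: algebra_simps)
  define R where "R = sqrt (Delta0 p q mh)"
  have R0: "R \<ge> 0" using D by (simp add: R_def)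
  have DK: "Delta0 p q mh = K^2 - 4*a*b"
    unfolding Delta0_def a_def b_def K_def by (simp add: power2_eq_square algebra_simps)
  have R2: "R^2 = K^2 - 4*a*b" using D DK by (simp add: R_def)
  define x where "x = x10 p q mh"
  have x_eq: "x = (K + R) / (2*a)"
    unfolding x_def x10_def R_def a_def K_def by (simp add: algebra_simps)
  have ax: "2*a*x = K + R" using apos by (simp add: x_eq)
  have quad: "a*x^2 - K*x + b = 0"
  proof -
    have "4*a*(a*x^2 - K*x + b) = (2*a*x)^2 - 2*K*(2*a*x) + 4*a*b"
      by (simp add: power2_eq_square algebra_simps)
    also have "\<dots> = (K+R)^2 - 2*K*(K+R) + 4*a*b" by (simp only: ax)
    also have "\<dots> = R^2 - K^2 + 4*a*b" by (simp add: power2_eq_square algebra_simps)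
    also have "\<dots> = 0" using R2 by simp
    finally show ?thesis using apos by simp
  qed
  have x1: "x > 1"
  proof (rule ccontr)
    assume "\<not> x > 1"
    hence xle: "x \<le> 1" by simp
    define x2 where "x2 = (K - R) / (2*a)"
    have ax2: "2*a*x2 = K - R" using apos by (simp add: x2_def)
    have "x2 \<le> x" using R0 apos by (simp add: x_eq x2_def divide_right_mono)
    hence "(1 - x) * (1 - x2) \<ge> 0" using xle by (intro mult_nonneg_nonneg) auto
    moreover have "4*a*a*((1 - x) * (1 - x2)) = 4*a*(a + b - K)"
    proof -
      have "4*a*a*((1 - x) * (1 - x2)) = (2*a - 2*a*x) * (2*a - 2*a*x2)" by (simp add: algebra_simps)
      also have "\<dots> = (2*a - (K+R)) * (2*a - (K - R))" by (simp only: ax ax2)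
      also have "\<dots> = 4*a*a - 4*a*K + K^2 - R^2" by (simp add: power2_eq_square algebra_simps)
      also have "\<dots> = 4*a*(a + b - K)" using R2 by (simp add: algebra_simps)
      finally show ?thesis .
    qed
    ultimately have "4*a*(a + b - K) \<ge> 0" using apos by (metis mult_nonneg_nonneg less_le zero_le_numeral mult.assoc)
    hence "a + b - K \<ge> 0" using apos by (simp add: zero_le_mult_iff)
    thus False using Kq \<open>0 < q\<close> by simp
  qed
  have r_eq: "r0 p q mh = 1 / x" by (simp add: r0_def x_def)
  show "0 < r0 p q mh" using x1 by (simp add: r_eq)
  show "r0 p q mh < 1" using x1 by (simp add: r_eq)
  have "x^2 * (b * (1/x)^2 - K * (1/x) + a) = a*x^2 - K*x + b"
    using x1 by (simp add: power2_eq_square field_simps)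
  hence "x^2 * (b * (1/x)^2 - K * (1/x) + a) = 0" using quad by simp
  thus "b * (r0 p q mh)^2 - K * r0 p q mh + a = 0" using x1 by (simp add: r_eq)
qed

lemma norm_rec_alg:
  fixes r x a b c t u0 u1 u2 phi :: real
  assumes r0: "r > 0" and x0: "x > 0" and b0: "b > 0"
    and Kr: "1 - c = b*r + a/r" and tdef: "t = a/(b*r^2)"
    and bal: "u1 = a*u0 + b*u2 + c*u1 + phi"
  shows "t * (u1/(r*x) - u0/x) = (u2/(r*(r*x)) - u1/(r*x)) + phi/(b*(r*(r*x)))"
proof -
  have phi: "phi = (1-c)*u1 - a*u0 - b*u2" using bal by (simp add: algebra_simps)
  have "t * (u1/(r*x) - u0/x) = a*(u1/r - u0)/(b*r*r*x)"
    using r0 x0 b0 by (simp add: tdef power2_eq_square field_simps)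
  also have "\<dots> = ((u2/(r*(r*x)) - u1/(r*x)) + phi/(b*(r*(r*x))))"
    using r0 x0 b0 unfolding phi Kr by (simp add: field_simps)
  finally show ?thesis .
qed

lemma dlim_lem:
  fixes u :: "nat \<Rightarrow> real"
  assumes r0: "r > 0" and t0: "t > 0" and s1: "t * r > 1" and ub: "\<And>i. \<bar>u i\<bar> \<le> 1"
  shows "(\<lambda>k. (u (Suc (n+k)) / r ^ Suc (n+k) - u (n+k) / r ^ (n+k)) / t^k) \<longlonglongrightarrow> 0"
proof (rule Lim_null_comparison)
  define s where "s = t * r"
  have spos: "s > 0" using s1 by (simp add: s_def)
  show "\<forall>\<^sub>F k in sequentially. norm ((u (Suc (n+k)) / r ^ Suc (n+k) - u (n+k) / r ^ (n+k)) / t^k)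
          \<le> (1/r + 1) / r^n * inverse s ^ k"
  proof (rule always_eventually, rule allI)
    fix k
    have eq: "(u (Suc (n+k)) / r ^ Suc (n+k) - u (n+k) / r ^ (n+k)) / t^k
          = (u (Suc (n+k)) / r - u (n+k)) / r^n * inverse s ^ k"
      using r0 t0 by (simp add: s_def power_add power_mult_distrib field_simps power_inverse)
    have nb: "\<bar>u (Suc (n+k)) / r - u (n+k)\<bar> \<le> 1/r + 1"
    proof -
      have "\<bar>u (Suc (n+k)) / r\<bar> \<le> 1/r" using ub[of "Suc (n+k)"] r0 by (simp add: abs_divide divide_right_mono)
      thus ?thesis using ub[of "n+k"] by linarith
    qed
    have "norm ((u (Suc (n+k)) / r - u (n+k)) / r^n * inverse s ^ k)
        = \<bar>u (Suc (n+k)) / r - u (n+k)\<bar> / r^n * inverse s ^ k"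
      using r0 spos by (simp add: abs_mult abs_divide power_abs)
    also have "\<dots> \<le> (1/r + 1) / r^n * inverse s ^ k"
      using nb r0 spos by (intro mult_right_mono divide_right_mono) auto
    finally show "norm ((u (Suc (n+k)) / r ^ Suc (n+k) - u (n+k) / r ^ (n+k)) / t^k)
          \<le> (1/r + 1) / r^n * inverse s ^ k" by (simp only: eq)
  qed
  have "s > 1" using s1 by (simp add: s_def)
  hence "inverse s < 1" by (simp add: inverse_less_1_iff)
  hence "(\<lambda>k. inverse s ^ k) \<longlonglongrightarrow> 0" using spos by (intro LIMSEQ_power_zero) simp
  thus "(\<lambda>k. (1/r + 1) / r^n * inverse s ^ k) \<longlonglongrightarrow> 0" by (rule tendsto_mult_right_zero)
qed


lemma G_alg:
  fixes r x N N1 N2 b al be ga u0 u1 u2 :: real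
  assumes "r > 0" "x > 0" "N > 0" "N1 > 0" "N2 > 0" "b \<noteq> 0"
  shows "(al*u0 + be*u1 + ga*u2)/(b*(r*(r*x)))/N
    = (al/r^2 * (u0/x/N) + be/r * (u1/(r*x)/N1) * (N1/N) + ga*(u2/(r*(r*x))/N2) * (N2/N))/b"
  using assms by (simp add: power2_eq_square field_simps)

theorem theorem6p1:
  fixes p q mh ml :: real and \<pi> :: "nat \<Rightarrow> nat \<Rightarrow> real" and j :: nat
  assumes "0 < p" "p < 1" "0 < q" "q < 1" "0 < mh" "mh < 1" "0 < ml" "ml < 1"
    and "p + q + mh + ml = 1" and "ml \<le> mh"
    and "p / mh + q / ml < 1"
    and "Delta0 p q mh > 0"
    and "is_stationary p q mh ml \<pi>"
  shows "(\<lambda>i. \<pi> i j) \<sim>[at_top]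
         (\<lambda>i. Cconst p q mh ^ j * \<pi> 0 0 / fact j * real i ^ j * r0 p q mh ^ i)"
proof -
  note st = assms(13)
  define a where "a = p*(1-q)*(1-mh)"
  define b where "b = (1-p)*(1-q)*mh"
  define c where "c = (1-p)*(1-q)*(1-mh) + p*(1-q)*mh"
  define al where "al = p*q*(1-mh)"
  define be where "be = p*q*mh + (1-p)*q*(1-mh)"
  define ga where "ga = (1-p)*q*mh"
  define r where "r = r0 p q mh"
  define C where "C = Cconst p q mh"
  have apos: "a > 0" and bpos: "b > 0" using assms by (simp_all add: a_def b_def)
  have rf: "0 < r" "r < 1" "b * r^2 - (1 - c) * r + a = 0"
    using r_facts[OF assms(1-6) assms(12)] by (simp_all add: r_def a_def b_def c_def)
  have r0: "r > 0" and r1: "r < 1" using rf by simp_all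
  have Kr: "1 - c = b*r + a/r"
  proof -
    have "(1 - c) * r = b*r^2 + a" using rf(3) by simp
    thus ?thesis using r0 by (simp add: power2_eq_square field_simps)
  qed
  define t where "t = a/(b*r^2)"
  have tpos: "t > 0" using apos bpos r0 by (simp add: t_def)
  have tr1: "t * r > 1"
  proof -
    have "b*(1-r)*(1 - t*r) = a + b - (1-c)"
      using r0 bpos unfolding Kr t_def by (simp add: power2_eq_square field_simps)
    also have "\<dots> = - q" by (simp add: a_def b_def c_def algebra_simps)
    finally have "b*(1-r)*(1 - t*r) < 0" using assms(3) by simp
    moreover have "b*(1-r) > 0" using bpos r1 by simp
    ultimately have both: "b*(1-r)*(1 - t*r) < 0 \<and> b*(1-r) > 0" by simp
    show ?thesis
    proof (rule ccontr)
      assume "\<not> 1 < t * r"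
      hence "b*(1-r)*(1 - t*r) \<ge> 0" using both bpos r1 by (intro mult_nonneg_nonneg) auto
      thus False using both by simp
    qed
  qed
  have t1: "t > 1"
  proof -
    have "t * r < t * 1" using tpos r1 by (intro mult_strict_left_mono) auto
    thus ?thesis using tr1 by simp
  qed
  have abr: "a - b*r^2 > 0"
  proof -
    have "a/(b*r^2) > 1" using t1 by (simp add: t_def)
    thus ?thesis using bpos r0 by (simp add: field_simps)
  qed
  have Cfrac: "C = (al + be*r + ga*r^2)/(a - b*r^2)"
  proof -
    have "p*(1-mh) - (1-p)*mh*r^2 \<noteq> 0"
    proof -
      have "a - b*r^2 = (1-q)*(p*(1-mh) - (1-p)*mh*r^2)" by (simp add: a_def b_def algebra_simps)
      thus ?thesis using abr by auto
    qed
    moreover have "1 - q \<noteq> 0" using assms by simp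
    ultimately show ?thesis
      unfolding C_def Cconst_def Let_def r_def[symmetric] al_def be_def ga_def a_def b_def
      by (simp add: field_simps)
  qed
  have Ceq: "C = (al/r^2 + be/r + ga)/(b*(t-1))"
  proof -
    have "(al/r^2 + be/r + ga)/(b*(t-1)) = (al + be*r + ga*r^2)/(a - b*r^2)"
      using r0 bpos abr unfolding t_def by (simp add: power2_eq_square field_simps)
    thus ?thesis using Cfrac by simp
  qed
  have Cpos: "C > 0"
  proof -
    have "al + be*r + ga*r^2 > 0" using assms r0 by (simp add: al_def be_def ga_def add_pos_pos)
    thus ?thesis using abr Cfrac by simp
  qed
  have pi00: "\<pi> 0 0 > 0" by (rule pi00_pos[OF st assms(1-8)])
  have nn: "\<And>x y. \<pi> x y \<ge> 0" using st by (simp add: is_stationary_def)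
  have ub: "\<And>i j. \<bar>\<pi> i j\<bar> \<le> 1" using nn stat_le1[OF st] by (simp add: abs_of_nonneg)
  have t0: "t \<noteq> 0" using tpos by simp
  have main: "(\<lambda>n. \<pi> n j / r^n / real n ^ j) \<longlonglongrightarrow> C^j * \<pi> 0 0 / fact j" for j
  proof (induction j)
    case 0
    define g where "g n = \<pi> n 0 / r^n" for n
    define d where "d n = g (Suc n) - g n" for n
    have rec: "t * d n = d (Suc n) + 0" for n
    proof -
      have x: "r^n > 0" using r0 by simp
      have "t * (\<pi> (Suc n) 0/(r*r^n) - \<pi> n 0/r^n) = (\<pi> (Suc (Suc n)) 0/(r*(r*r^n)) - \<pi> (Suc n) 0/(r*r^n)) + 0/(b*(r*(r*r^n)))"
        by (rule norm_rec_alg[OF r0 x bpos Kr t_def]) (use bal0[OF st, of n] in \<open>simp add: a_def b_def c_def\<close>)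
      thus ?thesis by (simp add: d_def g_def)
    qed
    have dl: "(\<lambda>k. d (n+k) / t^k) \<longlonglongrightarrow> 0" for n
      unfolding d_def g_def using dlim_lem[OF r0 tpos tr1, where u = "\<lambda>i. \<pi> i 0"] ub by simp
    have d0: "d n = 0" for n
    proof -
      have "d n = d (n + k) / t ^ k + (\<Sum>j<k. (\<lambda>_. 0::real) (n + j) / t ^ Suc j)" for k
        by (rule iter_formula[OF t0]) (use rec in simp)
      hence "(\<lambda>k. d (n+k) / t^k) = (\<lambda>k. d n)" by simp
      with dl[of n] have "(\<lambda>k. d n) \<longlonglongrightarrow> 0" by simp
      thus ?thesis by (simp add: LIMSEQ_const_iff)
    qed
    have "g n = g 0" for n
    proof (induction n)
      case (Suc n) then show ?case using d0[of n] by (simp add: d_def)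
    qed simp
    hence "(\<lambda>n. \<pi> n 0 / r^n / real n ^ 0) = (\<lambda>n. \<pi> 0 0)" by (auto simp: g_def)
    thus ?case by simp
  next
    case (Suc j)
    define Kj where "Kj = C^j * \<pi> 0 0 / fact j"
    define X where "X n = \<pi> n j / r^n / real n ^ j" for n
    have Xl: "X \<longlonglongrightarrow> Kj" unfolding X_def[abs_def] Kj_def by (rule Suc.IH)
    have XS: "(\<lambda>n. X (Suc n)) \<longlonglongrightarrow> Kj" using LIMSEQ_Suc[OF Xl] .
    have XSS: "(\<lambda>n. X (Suc (Suc n))) \<longlonglongrightarrow> Kj" using LIMSEQ_Suc[OF XS] .
    have R1: "(\<lambda>n. real (Suc n) ^ j / real n ^ j) \<longlonglongrightarrow> 1" by real_asymp
    have R2: "(\<lambda>n. real (Suc (Suc n)) ^ j / real n ^ j) \<longlonglongrightarrow> 1" by real_asymp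
    define g where "g n = \<pi> n (Suc j) / r^n" for n
    define d where "d n = g (Suc n) - g n" for n
    define G where "G n = (al*\<pi> n j + be*\<pi> (Suc n) j + ga*\<pi> (Suc (Suc n)) j)/(b*r^(Suc (Suc n)))" for n
    have rec: "t * d n = d (Suc n) + G n" for n
    proof -
      have x: "r^n > 0" using r0 by simp
      have "t * (\<pi> (Suc n) (Suc j)/(r*r^n) - \<pi> n (Suc j)/r^n) = (\<pi> (Suc (Suc n)) (Suc j)/(r*(r*r^n)) - \<pi> (Suc n) (Suc j)/(r*r^n))
          + (al*\<pi> n j + be*\<pi> (Suc n) j + ga*\<pi> (Suc (Suc n)) j)/(b*(r*(r*r^n)))"
        by (rule norm_rec_alg[OF r0 x bpos Kr t_def])
          (use balS[OF st, of n j] in \<open>simp add: a_def b_def c_def al_def be_def ga_def\<close>)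
      thus ?thesis by (simp add: d_def g_def G_def)
    qed
    define L where "L = (al/r^2 * Kj + be/r * Kj * 1 + ga * Kj * 1)/b"
    have Glim: "(\<lambda>n. G n / real n ^ j) \<longlonglongrightarrow> L"
    proof -
      have lim: "(\<lambda>n. (al/r^2 * X n + be/r * X (Suc n) * (real (Suc n) ^ j / real n ^ j)
            + ga * X (Suc (Suc n)) * (real (Suc (Suc n)) ^ j / real n ^ j))/b) \<longlonglongrightarrow> L"
        unfolding L_def using bpos by (intro tendsto_intros Xl XS XSS R1 R2) auto
      have ev: "\<forall>\<^sub>F n in sequentially. (al/r^2 * X n + be/r * X (Suc n) * (real (Suc n) ^ j / real n ^ j)
            + ga * X (Suc (Suc n)) * (real (Suc (Suc n)) ^ j / real n ^ j))/b = G n / real n ^ j"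
        unfolding eventually_sequentially
      proof (intro exI[of _ 1] allI impI)
        fix n :: nat assume n1: "n \<ge> 1"
        show "(al/r^2 * X n + be/r * X (Suc n) * (real (Suc n) ^ j / real n ^ j)
            + ga * X (Suc (Suc n)) * (real (Suc (Suc n)) ^ j / real n ^ j))/b = G n / real n ^ j"
          unfolding G_def X_def power_Suc
          by (rule G_alg[symmetric]) (use r0 n1 bpos in auto)
      qed
      show ?thesis using Lim_transform_eventually[OF lim ev] .
    qed
    have dl: "(\<lambda>k. d (n+k) / t^k) \<longlonglongrightarrow> 0" for n
      unfolding d_def g_def using dlim_lem[OF r0 tpos tr1, where u = "\<lambda>i. \<pi> i (Suc j)"] ub by simp
    have dlim: "(\<lambda>n. d n / real n ^ j) \<longlonglongrightarrow> L / (t - 1)"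
      by (rule lemT[OF t1 rec dl Glim])
    have grec: "g (Suc n) = g n + d n" for n by (simp add: d_def)
    have glim: "(\<lambda>n. g n / real n ^ Suc j) \<longlonglongrightarrow> L / (t - 1) / real (Suc j)"
      by (rule lemS[OF grec dlim])
    have "L / (t - 1) = Kj * C"
      unfolding L_def Ceq using t1 bpos by (simp add: field_simps)
    hence "L / (t - 1) / real (Suc j) = Kj * C / real (Suc j)" by simp
    also have "\<dots> = C ^ Suc j * \<pi> 0 0 / (real (Suc j) * fact j)"
      by (simp add: Kj_def field_simps)
    also have "\<dots> = C ^ Suc j * \<pi> 0 0 / fact (Suc j)" by (simp only: fact_Suc of_nat_mult)
    finally have val: "L / (t - 1) / real (Suc j) = C ^ Suc j * \<pi> 0 0 / fact (Suc j)" .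
    show ?case using glim unfolding val g_def .
  qed
  define Kj where "Kj = C^j * \<pi> 0 0 / fact j"
  have Kpos: "Kj > 0" using Cpos pi00 by (simp add: Kj_def)
  have "(\<lambda>i. inverse Kj * (\<pi> i j / r^i / real i ^ j)) \<longlonglongrightarrow> inverse Kj * Kj"
    by (intro tendsto_intros) (use main[of j] in \<open>simp add: Kj_def\<close>)
  moreover have "inverse Kj * (\<pi> i j / r^i / real i ^ j) = \<pi> i j / (Kj * real i ^ j * r ^ i)" for i
    by (simp add: divide_inverse mult_ac inverse_mult_distrib)
  ultimately have lim1: "(\<lambda>i. \<pi> i j / (Kj * real i ^ j * r ^ i)) \<longlonglongrightarrow> 1" using Kpos by simp
  show ?thesis unfolding C_def[symmetric] r_def[symmetric]
    by (rule asymp_equivI') (use lim1 in \<open>simp add: Kj_def\<close>)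
qed
end
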